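(* Let $G=(V,E)$ be a finite simple graph of order $n$ and let $T=n-1$. If $(x,y,z)$ is an optimal solution of the integer program with the constraints of the Time Step Model $\mathrm{TSM}(G,T)$ and objective "minimize $\sum_{v\in V}x^0_v+\frac{1}{2T}\sum_{t\in[T]}z^t$", then $C=\{v\in V\colon x^0_v=1\}$ is a minimum zero forcing set of $G$ with $\mathrm{pt}(G)=\mathrm{pt}(G,C)=\sum_{t\in[T]}z^t$.
   Context: Zero forcing: under the standard color change rule a filled vertex $u$ can force a non-filled vertex $v$ if $v$ is the only non-filled neighbor of $u$; $C\subseteq V$ is a zero forcing set if, starting with $C$ filled and repeatedly forcing, all of $V$ becomes filled; a minimum zero forcing set is one of minimum size. The propagation time $\mathrm{pt}(G,C)$ is the smallest $t^*$ such that, starting from $C^{[0]}=C$ and setting $C^{[t]}=C^{[t-1]}\cup\{v\notin C^{[t-1]}\colon$ some $u\in C^{[t-1]}$ has $v$ as its only neighbor outside $C^{[t-1]}\}$, one has $C^{[t^*]}=V$ ($\infty$ if $C$ is not a zero forcing set). $\mathrm{pt}(G)=\min\{\mathrm{pt}(G,C)\colon C$ a minimum zero forcing set$\}$. $N(u)$ is the neighborhood of $u$ and $d(u)=|N(u)|$. Time Step Model constraints: $A$ is the set of arcs containing $(u,v)$ and $(v,u)$ for each edge $\{u,v\}$, $[T]=\{1,\dots,T\}$. Binary variables $x^t_v$ ($v\in V$, $t\in\{0,\dots,T\}$), $y^t_a$ ($a\in A$, $t\in[T]$), $z^t$ ($t\in[T]$), with constraints: (1) $x^0_v+\sum_{t\in[T]}\sum_{a=(u,v)\in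 A}y^t_a=1$ for all $v$; (2) $y^t_a\leq x^{t-1}_u$ for all $a=(u,v)\in A$, $t\in[T]$; (3) $y^t_a\leq x^{t-1}_w$ for all $a=(u,v)\in A$, $w\in N(u)\setminus\{v\}$, $t\in[T]$; (4) $x^t_v=x^{t-1}_v+\sum_{a=(u,v)\in A}y^t_a$ for all $v$, $t\in[T]$; (5) $x^{t-1}_u-x^{t-1}_v+\sum_{w\in N(u)\setminus\{v\}}x^{t-1}_w\leq\sum_{a=(w,v)\in A}y^t_a+d(u)-1$ for all $(u,v)\in A$, $t\in[T]$; (6) $\frac1n\sum_{v\in V}(x^t_v-x^{t-1}_v)-z^t\leq0$ for all $t\in[T]$; (7) $z^t-\sum_{v\in V}(x^t_v-x^{t-1}_v)\leq 0$ for all $t\in[T]$. *)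

theory Defs
  imports Main "HOL-Library.Extended_Nat"
begin

definition simple_graph :: "'a set \<Rightarrow> ('a \<Rightarrow> 'a \<Rightarrow> bool) \<Rightarrow> bool" where
  "simple_graph V E \<longleftrightarrow> finite V \<and> (\<forall>u v. E u v \<longrightarrow> u \<in> V \<and> v \<in> V)
     \<and> (\<forall>u v. E u v \<longrightarrow> E v u) \<and> (\<forall>u. \<not> E u u)"

definition nbhd :: "'a set \<Rightarrow> ('a \<Rightarrow> 'a \<Rightarrow> bool) \<Rightarrow> 'a \<Rightarrow> 'a set" where
  "nbhd V E u = {w \<in> V. E u w}"

definition deg :: "'a set \<Rightarrow> ('a \<Rightarrow> 'a \<Rightarrow> bool) \<Rightarrow> 'a \<Rightarrow> nat" where
  "deg V E u = card (nbhd V E u)"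

definition force_step :: "'a set \<Rightarrow> ('a \<Rightarrow> 'a \<Rightarrow> bool) \<Rightarrow> 'a set \<Rightarrow> 'a set" where
  "force_step V E C = C \<union> {v \<in> V - C. \<exists>u\<in>C. nbhd V E u - C = {v}}"

definition filled_at :: "'a set \<Rightarrow> ('a \<Rightarrow> 'a \<Rightarrow> bool) \<Rightarrow> 'a set \<Rightarrow> nat \<Rightarrow> 'a set" where
  "filled_at V E C t = (force_step V E ^^ t) C"

definition zero_forcing_set :: "'a set \<Rightarrow> ('a \<Rightarrow> 'a \<Rightarrow> bool) \<Rightarrow> 'a set \<Rightarrow> bool" where
  "zero_forcing_set V E C \<longleftrightarrow> C \<subseteq> V \<and> (\<exists>t. filled_at V E C t = V)"

definition min_zero_forcing_set :: "'a set \<Rightarrow> ('a \<Rightarrow> 'a \<Rightarrow> bool) \<Rightarrow> 'a set \<Rightarrow> bool" where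
  "min_zero_forcing_set V E C \<longleftrightarrow> zero_forcing_set V E C \<and>
     (\<forall>D. zero_forcing_set V E D \<longrightarrow> card C \<le> card D)"

definition pt_set :: "'a set \<Rightarrow> ('a \<Rightarrow> 'a \<Rightarrow> bool) \<Rightarrow> 'a set \<Rightarrow> enat" where
  "pt_set V E C = (if zero_forcing_set V E C
      then enat (LEAST t. filled_at V E C t = V) else \<infinity>)"

definition pt_graph :: "'a set \<Rightarrow> ('a \<Rightarrow> 'a \<Rightarrow> bool) \<Rightarrow> enat" where
  "pt_graph V E = Min (pt_set V E ` {C. min_zero_forcing_set V E C})"

definition tsm_feasible :: "'a set \<Rightarrow> ('a \<Rightarrow> 'a \<Rightarrow> bool) \<Rightarrow> nat \<Rightarrow>
    ('a \<Rightarrow> nat \<Rightarrow> real) \<Rightarrow> ('a \<times> 'a \<Rightarrow> nat \<Rightarrow> real) \<Rightarrow> (nat \<Rightarrow> real) \<Rightarrow> bool" where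
  "tsm_feasible V E T x y z \<longleftrightarrow>
     (\<forall>v\<in>V. \<forall>t\<in>{0..T}. x v t \<in> {0,1}) \<and>
     (\<forall>u v. E u v \<longrightarrow> (\<forall>t\<in>{1..T}. y (u,v) t \<in> {0,1})) \<and>
     (\<forall>t\<in>{1..T}. z t \<in> {0,1}) \<and>
     \<comment> \<open>(1)\<close>
     (\<forall>v\<in>V. x v 0 + (\<Sum>t\<in>{1..T}. \<Sum>u\<in>nbhd V E v. y (u,v) t) = 1) \<and>
     \<comment> \<open>(2)\<close>
     (\<forall>u v. E u v \<longrightarrow> (\<forall>t\<in>{1..T}. y (u,v) t \<le> x u (t-1))) \<and>
     \<comment> \<open>(3)\<close>
     (\<forall>u v. E u v \<longrightarrow> (\<forall>w\<in>nbhd V E u - {v}. \<forall>t\<in>{1..T}. y (u,v) t \<le> x w (t-1))) \<and>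
     \<comment> \<open>(4)\<close>
     (\<forall>v\<in>V. \<forall>t\<in>{1..T}. x v t = x v (t-1) + (\<Sum>u\<in>nbhd V E v. y (u,v) t)) \<and>
     \<comment> \<open>(5)\<close>
     (\<forall>u v. E u v \<longrightarrow> (\<forall>t\<in>{1..T}.
        x u (t-1) - x v (t-1) + (\<Sum>w\<in>nbhd V E u - {v}. x w (t-1))
          \<le> (\<Sum>w\<in>nbhd V E v. y (w,v) t) + real (deg V E u) - 1)) \<and>
     \<comment> \<open>(6)\<close>
     (\<forall>t\<in>{1..T}. (1 / real (card V)) * (\<Sum>v\<in>V. x v t - x v (t-1)) - z t \<le> 0) \<and>
     \<comment> \<open>(7)\<close>
     (\<forall>t\<in>{1..T}. z t - (\<Sum>v\<in>V. x v t - x v (t-1)) \<le> 0)"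

definition tsm_objective :: "'a set \<Rightarrow> nat \<Rightarrow> ('a \<Rightarrow> nat \<Rightarrow> real) \<Rightarrow> (nat \<Rightarrow> real) \<Rightarrow> real" where
  "tsm_objective V T x z = (\<Sum>v\<in>V. x v 0) + (1 / (2 * real T)) * (\<Sum>t\<in>{1..T}. z t)"

definition tsm_optimal :: "'a set \<Rightarrow> ('a \<Rightarrow> 'a \<Rightarrow> bool) \<Rightarrow> nat \<Rightarrow>
    ('a \<Rightarrow> nat \<Rightarrow> real) \<Rightarrow> ('a \<times> 'a \<Rightarrow> nat \<Rightarrow> real) \<Rightarrow> (nat \<Rightarrow> real) \<Rightarrow> bool" where
  "tsm_optimal V E T x y z \<longleftrightarrow> tsm_feasible V E T x y z \<and>
     (\<forall>x' y' z'. tsm_feasible V E T x' y' z' \<longrightarrow> tsm_objective V T x z \<le> tsm_objective V T x' z')"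

end

theory Submission
  imports Defs
begin

lemma fs_sup: "A \<subseteq> force_step V E A" by (auto simp: force_step_def)
lemma fs_sub: "A \<subseteq> V \<Longrightarrow> force_step V E A \<subseteq> V" by (auto simp: force_step_def)
lemma fs_empty: "force_step V E {} = {}" by (auto simp: force_step_def)
lemma fs_V: "force_step V E V = V" by (auto simp: force_step_def)

lemma filled_0[simp]: "filled_at V E C 0 = C" by (simp add: filled_at_def)
lemma filled_Suc: "filled_at V E C (Suc t) = force_step V E (filled_at V E C t)"
  by (simp add: filled_at_def)

lemma filled_sub: "C \<subseteq> V \<Longrightarrow> filled_at V E C t \<subseteq> V"
  by (induction t) (auto simp: filled_Suc dest: fs_sub)

lemma filled_mono: "s \<le> t \<Longrightarrow> filled_at V E C s \<subseteq> filled_at V E C t"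
proof (induction t rule: dec_induct)
  case base then show ?case by simp
next
  case (step n) then show ?case using fs_sup[of "filled_at V E C n" V E] by (auto simp: filled_Suc)
qed

lemma filled_fix: assumes h: "filled_at V E C (Suc t) = filled_at V E C t"
  shows "t \<le> s \<Longrightarrow> filled_at V E C s = filled_at V E C t"
proof (induction s rule: dec_induct)
  case base then show ?case by simp
next
  case (step n) then show ?case using h by (simp add: filled_Suc)
qed

lemma filled_empty: "filled_at V E {} t = {}"
  by (induction t) (auto simp: filled_Suc fs_empty)

lemma filled_Vfix: "filled_at V E C t = V \<Longrightarrow> t \<le> s \<Longrightarrow> filled_at V E C s = V"
  using filled_fix[of V E C t s] by (simp add: filled_Suc fs_V)

definition LL :: "'a set \<Rightarrow> ('a \<Rightarrow> 'a \<Rightarrow> bool) \<Rightarrow> 'a set \<Rightarrow> nat" where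
  "LL V E C = (LEAST t. filled_at V E C t = V)"

lemma LL_I: "zero_forcing_set V E C \<Longrightarrow> filled_at V E C (LL V E C) = V"
  unfolding zero_forcing_set_def LL_def by (metis (mono_tags, lifting) LeastI_ex)

lemma LL_le: "filled_at V E C t = V \<Longrightarrow> LL V E C \<le> t"
  unfolding LL_def by (rule Least_le)

lemma LL_grow: assumes "zero_forcing_set V E C" "t < LL V E C"
  shows "filled_at V E C t \<subset> filled_at V E C (Suc t)"
proof -
  have ne: "filled_at V E C t \<noteq> V" using assms(2) LL_le[of V E C t] by auto
  have "filled_at V E C t \<noteq> filled_at V E C (Suc t)"
  proof
    assume "filled_at V E C t = filled_at V E C (Suc t)"
    then have "filled_at V E C (LL V E C) = filled_at V E C t"
      using filled_fix[of V E C t "LL V E C"] assms(2) by simp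
    then show False using ne LL_I[OF assms(1)] by simp
  qed
  then show ?thesis using filled_mono[of t "Suc t" V E C] by auto
qed

lemma LL_card: assumes "zero_forcing_set V E C" "finite V"
  shows "t \<le> LL V E C \<Longrightarrow> card C + t \<le> card (filled_at V E C t)"
proof (induction t)
  case 0 then show ?case by simp
next
  case (Suc t)
  have CV: "C \<subseteq> V" using assms(1) by (simp add: zero_forcing_set_def)
  have "card (filled_at V E C t) < card (filled_at V E C (Suc t))"
    using LL_grow[OF assms(1), of t] Suc.prems filled_sub[OF CV] assms(2)
    by (meson Suc_le_lessD psubset_card_mono rev_finite_subset)
  then show ?case using Suc by simp
qed

lemma LL_leT: assumes "simple_graph V E" "zero_forcing_set V E C"
  shows "LL V E C \<le> card V - 1"
proof (cases "V = {}")
  case True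
  then have "C = {}" using assms(2) by (simp add: zero_forcing_set_def)
  then have "LL V E C = 0" using True LL_le[of V E C 0] by simp
  then show ?thesis by simp
next
  case False
  have fin: "finite V" using assms(1) by (simp add: simple_graph_def)
  have CV: "C \<subseteq> V" using assms(2) by (simp add: zero_forcing_set_def)
  have "C \<noteq> {}" using LL_I[OF assms(2)] filled_empty False by metis
  then have "card C \<ge> 1" using fin CV by (meson card_0_eq finite_subset less_one not_le)
  moreover have "card (filled_at V E C (LL V E C)) \<le> card V" using LL_I[OF assms(2)] by simp
  ultimately show ?thesis using LL_card[OF assms(2) fin, of "LL V E C"] by simp
qed

lemma count_steps: assumes "zero_forcing_set V E C" "LL V E C \<le> T"
  shows "(\<Sum>t\<in>{1..T}. if filled_at V E C t \<noteq> filled_at V E C (t-1) then 1 else (0::real)) = real (LL V E C)"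
proof -
  let ?L = "LL V E C"
  have "\<And>t. t \<in> {1..T} \<Longrightarrow> (filled_at V E C t \<noteq> filled_at V E C (t-1)) = (t \<in> {1..?L})"
  proof -
    fix t assume t: "t \<in> {1..T}"
    then obtain s where s: "t = Suc s" by (cases t) auto
    show "(filled_at V E C t \<noteq> filled_at V E C (t-1)) = (t \<in> {1..?L})"
    proof (cases "t \<le> ?L")
      case True
      then show ?thesis using LL_grow[OF assms(1), of s] s by auto
    next
      case False
      then show ?thesis using filled_Vfix[OF LL_I[OF assms(1)]] s by auto
    qed
  qed
  then have "(\<Sum>t\<in>{1..T}. if filled_at V E C t \<noteq> filled_at V E C (t-1) then 1 else (0::real))
      = (\<Sum>t\<in>{1..T}. if t \<in> {1..?L} then 1 else (0::real))"
    by (intro sum.cong) auto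
  also have "\<dots> = (\<Sum>t\<in>{1..T} \<inter> {1..?L}. (1::real))"
    by (rule sum.inter_restrict[symmetric]) simp
  also have "{1..T} \<inter> {1..?L} = {1..?L}" using assms(2) by auto
  finally show ?thesis by simp
qed

lemma feas_part:
  assumes sg: "simple_graph V E" and f: "tsm_feasible V E T x y z"
  defines "C \<equiv> {v \<in> V. x v 0 = 1}"
  shows "zero_forcing_set V E C \<and> LL V E C \<le> T \<and> (\<Sum>t\<in>{1..T}. z t) = real (LL V E C)"
proof -
  have fin: "finite V" and sym: "\<And>u v. E u v \<Longrightarrow> E v u" and inV: "\<And>u v. E u v \<Longrightarrow> u \<in> V \<and> v \<in> V"
    using sg by (auto simp: simple_graph_def)
  have finN: "\<And>u. finite (nbhd V E u)" using fin by (simp add: nbhd_def)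
  have NV: "\<And>u. nbhd V E u \<subseteq> V" by (auto simp: nbhd_def)
  note F = f[unfolded tsm_feasible_def]
  have xb: "\<And>v t. v \<in> V \<Longrightarrow> t \<le> T \<Longrightarrow> x v t = 0 \<or> x v t = 1" using F[THEN conjunct1] by auto
  have yb: "\<And>u v t. E u v \<Longrightarrow> 1 \<le> t \<Longrightarrow> t \<le> T \<Longrightarrow> y (u,v) t = 0 \<or> y (u,v) t = 1" using F[THEN conjunct2, THEN conjunct1] by auto
  have zb: "\<And>t. 1 \<le> t \<Longrightarrow> t \<le> T \<Longrightarrow> z t = 0 \<or> z t = 1" using F[THEN conjunct2, THEN conjunct2, THEN conjunct1] by auto
  have c1: "\<And>v. v \<in> V \<Longrightarrow> x v 0 + (\<Sum>t\<in>{1..T}. \<Sum>u\<in>nbhd V E v. y (u,v) t) = 1" using F[THEN conjunct2, THEN conjunct2, THEN conjunct2, THEN conjunct1] by auto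
  have c2: "\<And>u v t. E u v \<Longrightarrow> 1 \<le> t \<Longrightarrow> t \<le> T \<Longrightarrow> y (u,v) t \<le> x u (t-1)" using F[THEN conjunct2, THEN conjunct2, THEN conjunct2, THEN conjunct2, THEN conjunct1] by auto
  have c3: "\<And>u v w t. E u v \<Longrightarrow> w \<in> nbhd V E u - {v} \<Longrightarrow> 1 \<le> t \<Longrightarrow> t \<le> T \<Longrightarrow> y (u,v) t \<le> x w (t-1)"
    using F[THEN conjunct2, THEN conjunct2, THEN conjunct2, THEN conjunct2, THEN conjunct2, THEN conjunct1] by auto
  have c4: "\<And>v t. v \<in> V \<Longrightarrow> 1 \<le> t \<Longrightarrow> t \<le> T \<Longrightarrow> x v t = x v (t-1) + (\<Sum>u\<in>nbhd V E v. y (u,v) t)"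
    using F[THEN conjunct2, THEN conjunct2, THEN conjunct2, THEN conjunct2, THEN conjunct2, THEN conjunct2, THEN conjunct1] by auto
  have c5: "\<And>u v t. E u v \<Longrightarrow> 1 \<le> t \<Longrightarrow> t \<le> T \<Longrightarrow>
        x u (t-1) - x v (t-1) + (\<Sum>w\<in>nbhd V E u - {v}. x w (t-1))
          \<le> (\<Sum>w\<in>nbhd V E v. y (w,v) t) + real (deg V E u) - 1" using F[THEN conjunct2, THEN conjunct2, THEN conjunct2, THEN conjunct2, THEN conjunct2, THEN conjunct2, THEN conjunct2, THEN conjunct1] by auto
  have c6: "\<And>t. 1 \<le> t \<Longrightarrow> t \<le> T \<Longrightarrow> (1 / real (card V)) * (\<Sum>v\<in>V. x v t - x v (t-1)) - z t \<le> 0"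
    using F[THEN conjunct2, THEN conjunct2, THEN conjunct2, THEN conjunct2, THEN conjunct2, THEN conjunct2, THEN conjunct2, THEN conjunct2, THEN conjunct1] by auto
  have c7: "\<And>t. 1 \<le> t \<Longrightarrow> t \<le> T \<Longrightarrow> z t - (\<Sum>v\<in>V. x v t - x v (t-1)) \<le> 0"
    using F[THEN conjunct2, THEN conjunct2, THEN conjunct2, THEN conjunct2, THEN conjunct2, THEN conjunct2, THEN conjunct2, THEN conjunct2, THEN conjunct2] by auto
  define S where "S v t = (\<Sum>u\<in>nbhd V E v. y (u,v) t)" for v t
  have Snn: "S v t \<ge> 0" if "v \<in> V" "1 \<le> t" "t \<le> T" for v t
    unfolding S_def
  proof (rule sum_nonneg)
    fix u assume "u \<in> nbhd V E v"
    then have "E u v" using sym[of v u] by (simp add: nbhd_def)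
    then show "y (u,v) t \<ge> 0" using yb[of u v t] that by auto
  qed
  have xsum: "t \<le> T \<longrightarrow> x v t = x v 0 + (\<Sum>s\<in>{1..t}. S v s)" if "v \<in> V" for v t
  proof (induction t)
    case 0 then show ?case by simp
  next
    case (Suc t)
    then show ?case using c4[of v "Suc t"] that by (auto simp: S_def)
  qed
  have xT: "x v T = 1" if "v \<in> V" for v
    using xsum[OF that, of T] c1[OF that] by (simp add: S_def)
  define X where "X t = {v \<in> V. x v t = 1}" for t
  have Xmono: "X (t-1) \<subseteq> X t" if "1 \<le> t" "t \<le> T" for t
  proof
    fix v assume "v \<in> X (t-1)"
    then have v: "v \<in> V" "x v (t-1) = 1" by (auto simp: X_def)
    then have "x v t \<ge> 1" using c4[of v t] Snn[of v t] that by (auto simp: S_def)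
    then show "v \<in> X t" using xb[of v t] v that by (auto simp: X_def)
  qed
  have step: "X t = force_step V E (X (t-1))" if t: "1 \<le> t" "t \<le> T" for t
  proof
    show "X t \<subseteq> force_step V E (X (t-1))"
    proof
      fix v assume vX: "v \<in> X t"
      then have v: "v \<in> V" "x v t = 1" by (auto simp: X_def)
      show "v \<in> force_step V E (X (t-1))"
      proof (cases "v \<in> X (t-1)")
        case True then show ?thesis using fs_sup[of "X (t-1)" V E] by blast
      next
        case False
        then have x0: "x v (t-1) = 0" using xb[of v "t-1"] v t by (simp add: X_def)
        then have "S v t = 1" using c4[of v t] v t by (simp add: S_def)
        have "\<exists>u\<in>nbhd V E v. y (u,v) t \<noteq> 0"
        proof (rule ccontr)
          assume "\<not> (\<exists>u\<in>nbhd V E v. y (u,v) t \<noteq> 0)"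
          then have "S v t = 0" unfolding S_def by simp
          then show False using \<open>S v t = 1\<close> by simp
        qed
        then obtain u where u: "u \<in> nbhd V E v" "y (u,v) t \<noteq> 0" by blast
        then have Euv: "E u v" using sym[of v u] by (simp add: nbhd_def)
        then have y1: "y (u,v) t = 1" using yb[of u v t] u t by auto
        have uV: "u \<in> V" using inV[OF Euv] by simp
        have uX: "u \<in> X (t-1)" using c2[OF Euv t] y1 xb[of u "t-1"] uV t by (auto simp: X_def)
        have wX: "w \<in> X (t-1)" if "w \<in> nbhd V E u - {v}" for w
        proof -
          have wV: "w \<in> V" using that NV[of u] by blast
          have "x w (t-1) \<ge> 1" using c3[OF Euv that t] y1 by simp
          then show ?thesis using xb[of w "t-1"] wV t by (auto simp: X_def)
        qed
        have "nbhd V E u - X (t-1) = {v}"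
          using wX False Euv v by (auto simp: nbhd_def)
        then show ?thesis using uX v False by (auto simp: force_step_def)
      qed
    qed
  next
    show "force_step V E (X (t-1)) \<subseteq> X t"
    proof
      fix v assume "v \<in> force_step V E (X (t-1))"
      then consider "v \<in> X (t-1)" | "v \<in> V" "v \<notin> X (t-1)" "\<exists>u\<in>X (t-1). nbhd V E u - X (t-1) = {v}"
        by (auto simp: force_step_def)
      then show "v \<in> X t"
      proof cases
        case 1 then show ?thesis using Xmono[OF t] by auto
      next
        case 2
        then obtain u where u: "u \<in> X (t-1)" "nbhd V E u - X (t-1) = {v}" by auto
        have x0: "x v (t-1) = 0" using xb[of v "t-1"] 2 t by (auto simp: X_def)
        have vN: "v \<in> nbhd V E u" using u by auto
        then have Euv: "E u v" by (simp add: nbhd_def)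
        have xu: "x u (t-1) = 1" using u by (simp add: X_def)
        have "(\<Sum>w\<in>nbhd V E u - {v}. x w (t-1)) = (\<Sum>w\<in>nbhd V E u - {v}. 1)"
          using u(2) by (intro sum.cong) (auto simp: X_def)
        also have "\<dots> = real (card (nbhd V E u - {v}))" by simp
        also have "\<dots> = real (deg V E u) - 1"
        proof -
          have "0 < card (nbhd V E u)" using vN finN[of u] card_gt_0_iff by blast
          then show ?thesis using vN finN[of u] by (simp add: deg_def card_Diff_singleton of_nat_diff Suc_le_eq)
        qed
        finally have eqd: "(\<Sum>w\<in>nbhd V E u - {v}. x w (t-1)) = real (deg V E u) - 1" .
        have cc: "x u (t-1) - x v (t-1) + (\<Sum>w\<in>nbhd V E u - {v}. x w (t-1)) \<le> S v t + real (deg V E u) - 1"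
          using c5[OF Euv t] unfolding S_def .
        have c4': "x v t = x v (t-1) + S v t" using c4[of v t] 2 t unfolding S_def by blast
        have "x v t \<le> 1" using xb[of v t] 2(1) t by auto
        then have "x v t = 1" using cc eqd xu x0 c4' by linarith
        then show ?thesis using 2 by (simp add: X_def)
      qed
    qed
  qed
  have XF: "t \<le> T \<longrightarrow> X t = filled_at V E C t" for t
  proof (induction t)
    case 0 then show ?case by (simp add: X_def C_def)
  next
    case (Suc t) then show ?case using step[of "Suc t"] by (simp add: filled_Suc)
  qed
  have CV: "C \<subseteq> V" by (auto simp: C_def)
  have XTV: "X T = V" using xT by (auto simp: X_def)
  have zfs: "zero_forcing_set V E C" unfolding zero_forcing_set_def
    using CV XF[of T] XTV by auto
  have LT: "LL V E C \<le> T" using LL_le[of V E C T] XF[of T] XTV by simp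
  have zeq: "z t = (if filled_at V E C t \<noteq> filled_at V E C (t-1) then 1 else 0)"
    if t: "t \<in> {1..T}" for t
  proof -
    have t': "1 \<le> t" "t \<le> T" using t by auto
    have XX: "X t = filled_at V E C t" "X (t-1) = filled_at V E C (t-1)" using XF t' by auto
    have dnn: "x v t - x v (t-1) \<ge> 0" if "v \<in> V" for v
      using c4[of v t] Snn[of v t] that t' unfolding S_def by simp
    show ?thesis
    proof (cases "X t = X (t-1)")
      case True
      have "x v t - x v (t-1) = 0" if "v \<in> V" for v
      proof -
        have m: "(x v t = 1) = (x v (t-1) = 1)" using True that unfolding X_def by blast
        have "t - 1 \<le> T" using t' by simp
        then show ?thesis using m xb[of v t] xb[of v "t-1"] that t' by auto
      qed
      then have "(\<Sum>v\<in>V. x v t - x v (t-1)) = 0" by simp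
      then have "z t = 0" using c7[OF t'] zb[OF t'] by auto
      then show ?thesis using True XX by simp
    next
      case False
      then obtain v where v: "v \<in> X t" "v \<notin> X (t-1)" using Xmono[OF t'] by auto
      then have vV: "v \<in> V" and "x v t - x v (t-1) = 1"
        using xb[of v "t-1"] t' by (auto simp: X_def)
      then have "1 \<le> (\<Sum>v\<in>V. x v t - x v (t-1))"
        using member_le_sum[of v V "\<lambda>v. x v t - x v (t-1)"] dnn fin by auto
      moreover have "card V > 0" using vV fin card_gt_0_iff by blast
      ultimately have "(1 / real (card V)) * (\<Sum>v\<in>V. x v t - x v (t-1)) > 0" by simp
      then have "z t = 1" using c6[OF t'] zb[OF t'] by auto
      then show ?thesis using False XX by simp
    qed
  qed
  have "(\<Sum>t\<in>{1..T}. z t) = (\<Sum>t\<in>{1..T}. if filled_at V E C t \<noteq> filled_at V E C (t-1) then 1 else (0::real))"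
    using zeq by (intro sum.cong) auto
  also have "\<dots> = real (LL V E C)" using count_steps[OF zfs LT] .
  finally show ?thesis using zfs LT by simp
qed

lemma constr_part:
  assumes sg: "simple_graph V E" and zfs: "zero_forcing_set V E D" and T: "T = card V - 1"
  shows "\<exists>x y z. tsm_feasible V E T x y z \<and>
     tsm_objective V T x z = real (card D) + (1 / (2 * real T)) * real (LL V E D)"
proof -
  have fin: "finite V" and sym: "\<And>u v. E u v \<Longrightarrow> E v u" and inV: "\<And>u v. E u v \<Longrightarrow> u \<in> V \<and> v \<in> V"
    using sg by (auto simp: simple_graph_def)
  have finN: "\<And>u. finite (nbhd V E u)" using fin by (simp add: nbhd_def)
  have NV: "\<And>u. nbhd V E u \<subseteq> V" by (auto simp: nbhd_def)
  have DV: "D \<subseteq> V" using zfs by (simp add: zero_forcing_set_def)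
  define G where "G t = filled_at V E D t" for t
  have GV: "G t \<subseteq> V" for t using filled_sub[OF DV] by (simp add: G_def)
  have LT: "LL V E D \<le> T" using LL_leT[OF sg zfs] T by simp
  have GT: "G T = V" using filled_Vfix[OF LL_I[OF zfs] LT] by (simp add: G_def)
  have Gm: "G (t-1) \<subseteq> G t" for t using filled_mono[of "t-1" t V E D] by (simp add: G_def)
  have Gs: "G t = force_step V E (G (t-1))" if "1 \<le> t" for t
    using that filled_Suc[of V E D "t-1"] by (simp add: G_def)
  define fw where "fw t v = (SOME u. u \<in> G (t-1) \<and> nbhd V E u - G (t-1) = {v})" for t v
  have fwP: "fw t v \<in> G (t-1) \<and> nbhd V E (fw t v) - G (t-1) = {v}"
    if "1 \<le> t" "v \<in> G t" "v \<notin> G (t-1)" for t v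
  proof -
    have "\<exists>u. u \<in> G (t-1) \<and> nbhd V E u - G (t-1) = {v}"
      using that Gs[OF that(1)] by (auto simp: force_step_def)
    then show ?thesis unfolding fw_def by (rule someI_ex)
  qed
  have fwN: "fw t v \<in> nbhd V E v" if "1 \<le> t" "v \<in> G t" "v \<notin> G (t-1)" for t v
  proof -
    have "v \<in> nbhd V E (fw t v)" using fwP[OF that] by auto
    then have "E (fw t v) v" by (simp add: nbhd_def)
    then show ?thesis using sym[of "fw t v" v] inV[of "fw t v" v] by (simp add: nbhd_def)
  qed
  define x where "x v t = (if v \<in> G t then 1 else (0::real))" for v t
  define y where "y p t = (if 1 \<le> t \<and> snd p \<in> G t \<and> snd p \<notin> G (t-1) \<and> fst p = fw t (snd p) then 1 else (0::real))" for p t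
  define z where "z t = (if G t \<noteq> G (t-1) then 1 else (0::real))" for t
  have Ssum: "(\<Sum>u\<in>nbhd V E v. y (u,v) t) = (if v \<in> G t \<and> v \<notin> G (t-1) then 1 else 0)"
    if "1 \<le> t" for v t
  proof (cases "v \<in> G t \<and> v \<notin> G (t-1)")
    case True
    then have "(\<Sum>u\<in>nbhd V E v. y (u,v) t) = (\<Sum>u\<in>nbhd V E v. if u = fw t v then 1 else 0)"
      using that by (intro sum.cong) (auto simp: y_def)
    also have "\<dots> = 1" using fwN[of t v] True that finN by simp
    finally show ?thesis using True by simp
  next
    case False
    then have "\<And>u. y (u,v) t = 0" by (auto simp: y_def)
    then show ?thesis using False by (simp only: sum.neutral) simp
  qed
  have dx: "x v t - x v (t-1) = (if v \<in> G t \<and> v \<notin> G (t-1) then 1 else 0)" for v t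
    using Gm[of t] by (auto simp: x_def)
  have tele: "x v 0 + (\<Sum>s\<in>{1..t}. \<Sum>u\<in>nbhd V E v. y (u,v) s) = x v t" for v t
  proof (induction t)
    case 0 then show ?case by simp
  next
    case (Suc t)
    have "x v (Suc t) - x v t = (\<Sum>u\<in>nbhd V E v. y (u,v) (Suc t))"
      using dx[of v "Suc t"] Ssum[of "Suc t" v] by simp
    then show ?case using Suc by simp
  qed
  have cnt: "(\<Sum>v\<in>V. x v t - x v (t-1)) = real (card (G t - G (t-1)))" for t
  proof -
    have "(\<Sum>v\<in>V. x v t - x v (t-1)) = (\<Sum>v\<in>V. if v \<in> G t - G (t-1) then 1 else 0)"
      using dx by (intro sum.cong) auto
    also have "\<dots> = (\<Sum>v\<in>V \<inter> (G t - G (t-1)). (1::real))"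
      by (rule sum.inter_restrict[symmetric]) (simp add: fin)
    also have "V \<inter> (G t - G (t-1)) = G t - G (t-1)" using GV by auto
    finally show ?thesis by simp
  qed
  have feas: "tsm_feasible V E T x y z"
    unfolding tsm_feasible_def
  proof (intro conjI ballI allI impI)
    show "x v t \<in> {0,1}" for v t by (simp add: x_def)
    show "y (u,v) t \<in> {0,1}" for u v t by (simp add: y_def)
    show "z t \<in> {0,1}" for t by (simp add: z_def)
    show "x v 0 + (\<Sum>t\<in>{1..T}. \<Sum>u\<in>nbhd V E v. y (u,v) t) = 1" if "v \<in> V" for v
      using tele[of v T] GT that by (simp add: x_def)
    show "y (u,v) t \<le> x u (t-1)" if "t \<in> {1..T}" for u v t
      using fwP[of t v] that by (auto simp: y_def x_def)
    show "y (u,v) t \<le> x w (t-1)" if "w \<in> nbhd V E u - {v}" "t \<in> {1..T}" for u v w t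
      using fwP[of t v] that by (auto simp: y_def x_def)
    show "x v t = x v (t-1) + (\<Sum>u\<in>nbhd V E v. y (u,v) t)" if "t \<in> {1..T}" for v t
      using dx[of v t] Ssum[of t v] that by auto
  next
    fix u v t assume Euv: "E u v" and t: "t \<in> {1..T}"
    define P where "P = G (t-1)"
    define A where "A = nbhd V E u - {v}"
    have vN: "v \<in> nbhd V E u" using Euv inV[OF Euv] by (simp add: nbhd_def)
    have cA: "real (deg V E u) = real (card A) + 1"
    proof -
      have "0 < card (nbhd V E u)" using vN finN[of u] card_gt_0_iff by blast
      then show ?thesis using vN finN[of u] by (simp add: A_def deg_def card_Diff_singleton of_nat_diff Suc_le_eq)
    qed
    have sA: "(\<Sum>w\<in>A. x w (t-1)) = real (card (A \<inter> P))"
    proof -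
      have "(\<Sum>w\<in>A. x w (t-1)) = (\<Sum>w\<in>A \<inter> P. (1::real))"
        unfolding x_def P_def by (rule sum.inter_restrict[symmetric]) (simp add: A_def finN)
      then show ?thesis by simp
    qed
    have finA: "finite A" using finN by (simp add: A_def)
    have le: "card (A \<inter> P) \<le> card A" using finA by (simp add: card_mono)
    have Snn: "(\<Sum>w\<in>nbhd V E v. y (w,v) t) \<ge> 0" by (rule sum_nonneg) (simp add: y_def)
    show "x u (t-1) - x v (t-1) + (\<Sum>w\<in>nbhd V E u - {v}. x w (t-1))
          \<le> (\<Sum>w\<in>nbhd V E v. y (w,v) t) + real (deg V E u) - 1"
    proof (cases "u \<in> P \<and> v \<notin> P \<and> A \<subseteq> P")
      case True
      then have "nbhd V E u - P = {v}" using vN by (auto simp: A_def)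
      then have "v \<in> G t" using Gs[of t] True t vN NV by (auto simp: force_step_def P_def)
      then have "(\<Sum>w\<in>nbhd V E v. y (w,v) t) = 1" using Ssum[of t v] True t by (simp add: P_def)
      moreover have "A \<inter> P = A" using True by auto
      ultimately show ?thesis using True sA cA by (simp add: A_def x_def P_def)
    next
      case False
      then consider "u \<notin> P" | "v \<in> P" | "\<not> A \<subseteq> P" by blast
      then show ?thesis
      proof cases
        case 1 then show ?thesis using sA cA le Snn by (simp add: A_def x_def P_def)
      next
        case 2 then show ?thesis using sA cA le Snn by (simp add: A_def x_def P_def)
      next
        case 3
        then have "A \<inter> P \<subset> A" by auto
        then have "card (A \<inter> P) < card A" using finA by (simp add: psubset_card_mono)
        then show ?thesis using sA cA Snn by (simp add: A_def x_def P_def)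
      qed
    qed
  next
    fix t assume t: "t \<in> {1..T}"
    have ne: "(G t \<noteq> G (t-1)) = (card (G t - G (t-1)) > 0)"
      using Gm[of t] GV[of t] fin
      by (metis Diff_eq_empty_iff card_gt_0_iff finite_Diff finite_subset subset_antisym)
    have cle: "card (G t - G (t-1)) \<le> card V" using GV[of t] fin by (meson Diff_subset card_mono order_trans)
    show "(1 / real (card V)) * (\<Sum>v\<in>V. x v t - x v (t-1)) - z t \<le> 0"
    proof (cases "G t = G (t-1)")
      case True then show ?thesis using cnt[of t] by (simp add: z_def)
    next
      case False
      then show ?thesis using cnt[of t] cle ne by (simp add: z_def divide_simps)
    qed
    show "z t - (\<Sum>v\<in>V. x v t - x v (t-1)) \<le> 0"
      using cnt[of t] ne by (simp add: z_def)
  qed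
  have o1: "(\<Sum>v\<in>V. x v 0) = real (card D)"
  proof -
    have "(\<Sum>v\<in>V. x v 0) = (\<Sum>v\<in>V \<inter> D. (1::real))"
      unfolding x_def G_def filled_0 by (rule sum.inter_restrict[symmetric]) (simp add: fin)
    also have "V \<inter> D = D" using DV by auto
    finally show ?thesis by simp
  qed
  have o2: "(\<Sum>t\<in>{1..T}. z t) = real (LL V E D)"
    using count_steps[OF zfs LT] by (simp add: z_def G_def)
  have "tsm_objective V T x z = real (card D) + (1 / (2 * real T)) * real (LL V E D)"
    using o1 o2 by (simp add: tsm_objective_def)
  then show ?thesis using feas by blast
qed

theorem corollary4p5:
  fixes V :: "'a set" and E :: "'a \<Rightarrow> 'a \<Rightarrow> bool"
    and x :: "'a \<Rightarrow> nat \<Rightarrow> real" and y :: "'a \<times> 'a \<Rightarrow> nat \<Rightarrow> real" and z :: "nat \<Rightarrow> real"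
  assumes "simple_graph V E"
    and "T = card V - 1"
    and "tsm_optimal V E T x y z"
  shows "min_zero_forcing_set V E {v \<in> V. x v 0 = 1} \<and>
         pt_graph V E = pt_set V E {v \<in> V. x v 0 = 1} \<and>
         pt_set V E {v \<in> V. x v 0 = 1} = enat (nat \<lfloor>\<Sum>t\<in>{1..T}. z t\<rfloor>) \<and>
         (\<Sum>t\<in>{1..T}. z t) = real (nat \<lfloor>\<Sum>t\<in>{1..T}. z t\<rfloor>)"
proof -
  note sg = assms(1) and TT = assms(2)
  have fin: "finite V" using sg by (simp add: simple_graph_def)
  have feas: "tsm_feasible V E T x y z" and
    optc: "\<And>x' y' z'. tsm_feasible V E T x' y' z' \<Longrightarrow> tsm_objective V T x z \<le> tsm_objective V T x' z'"
    using assms(3) by (auto simp: tsm_optimal_def)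
  define C where "C = {v \<in> V. x v 0 = 1}"
  have P: "zero_forcing_set V E C \<and> LL V E C \<le> T \<and> (\<Sum>t\<in>{1..T}. z t) = real (LL V E C)"
    using feas_part[OF sg feas] by (simp add: C_def)
  then have zfsC: "zero_forcing_set V E C" and LTC: "LL V E C \<le> T"
    and sumz: "(\<Sum>t\<in>{1..T}. z t) = real (LL V E C)" by auto
  have xb0: "x v 0 = 0 \<or> x v 0 = 1" if "v \<in> V" for v
    using feas that by (auto simp: tsm_feasible_def)
  have sx: "(\<Sum>v\<in>V. x v 0) = real (card C)"
  proof -
    have "(\<Sum>v\<in>V. x v 0) = (\<Sum>v\<in>V. if v \<in> C then 1 else 0)"
      using xb0 by (intro sum.cong) (auto simp: C_def)
    also have "\<dots> = (\<Sum>v\<in>V \<inter> C. (1::real))"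
      by (rule sum.inter_restrict[symmetric]) (simp add: fin)
    also have "V \<inter> C = C" by (auto simp: C_def)
    finally show ?thesis by simp
  qed
  have objC: "tsm_objective V T x z = real (card C) + (1 / (2 * real T)) * real (LL V E C)"
    using sx sumz by (simp add: tsm_objective_def)
  have bnd: "0 \<le> (1 / (2 * real T)) * real L \<and> (1 / (2 * real T)) * real L \<le> 1/2" if "L \<le> T" for L
  proof (cases "T = 0")
    case True then show ?thesis by simp
  next
    case False
    have "(1 / (2 * real T)) * real L \<le> (1 / (2 * real T)) * real T"
      using that by (intro mult_left_mono) auto
    also have "\<dots> = 1/2" using False by simp
    finally show ?thesis by simp
  qed
  have cmp: "real (card C) + (1 / (2 * real T)) * real (LL V E C)
      \<le> real (card D) + (1 / (2 * real T)) * real (LL V E D)" if zD: "zero_forcing_set V E D" for D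
  proof -
    obtain x' y' z' where f': "tsm_feasible V E T x' y' z'"
      and o': "tsm_objective V T x' z' = real (card D) + (1 / (2 * real T)) * real (LL V E D)"
      using constr_part[OF sg zD TT] by blast
    show ?thesis using optc[OF f'] o' objC by simp
  qed
  have cle: "card C \<le> card D" if "zero_forcing_set V E D" for D
  proof -
    have "LL V E D \<le> T" using LL_leT[OF sg that] TT by simp
    then have "real (card C) < real (card D) + 1"
      using cmp[OF that] bnd[of "LL V E D"] bnd[OF LTC] by linarith
    then show ?thesis by linarith
  qed
  have minC: "min_zero_forcing_set V E C"
    unfolding min_zero_forcing_set_def using zfsC cle by blast
  have ptC: "pt_set V E C = enat (LL V E C)"
    using zfsC by (simp add: pt_set_def LL_def)
  have ptle: "pt_set V E C \<le> pt_set V E D" if "min_zero_forcing_set V E D" for D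
  proof -
    have zD: "zero_forcing_set V E D" and "card D \<le> card C"
      using that minC by (auto simp: min_zero_forcing_set_def)
    then have eq: "card C = card D" using cle by (simp add: le_antisym)
    have LD: "LL V E D \<le> T" using LL_leT[OF sg zD] TT by simp
    have "LL V E C \<le> LL V E D"
    proof (cases "T = 0")
      case True then show ?thesis using LTC by simp
    next
      case False
      have "(1 / (2 * real T)) * real (LL V E C) \<le> (1 / (2 * real T)) * real (LL V E D)"
        using cmp[OF zD] eq by simp
      then show ?thesis using False by (simp add: divide_simps)
    qed
    then show ?thesis using ptC zD by (simp add: pt_set_def LL_def)
  qed
  have finS: "finite {C. min_zero_forcing_set V E C}"
  proof (rule finite_subset[of _ "Pow V"])
    show "{C. min_zero_forcing_set V E C} \<subseteq> Pow V"
      by (auto simp: min_zero_forcing_set_def zero_forcing_set_def)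
  qed (simp add: fin)
  have ptG: "pt_graph V E = pt_set V E C"
    unfolding pt_graph_def
    by (rule Min_eqI) (use finS minC ptle in auto)
  have fl: "nat \<lfloor>\<Sum>t\<in>{1..T}. z t\<rfloor> = LL V E C" using sumz by simp
  show ?thesis using minC ptG ptC fl sumz unfolding C_def[symmetric] by simp
qed

end
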